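(* Let $n\in\mathbb{N}$ and $a\in\mathbb{R}$ with $|a|\ge2$. Let $G_n(a,1)$ be the $(n+2)\times n$ matrix whose $(i,j)$ entry is $1$ if $i=j$, $a$ if $i=j+1$, $1$ if $i=j+2$, and $0$ otherwise. For $1\le i<j\le n+2$, let $G_n(a,1)^{i,j}$ be the $n\times n$ matrix obtained by deleting the $i$-th and $j$-th rows of $G_n(a,1)$. Then $G_n(a,1)^{i,j}$ is invertible; that is, all order-$n$ minors of $G_n(a,1)$ are nonzero. *)

theory Defs
  imports "Jordan_Normal_Form.Determinant" "Jordan_Normal_Form.DL_Submatrix"
begin

text \<open>G_n(a,1): the (n+2) x n matrix with entry 1 if i=j, a if i=j+1, 1 if i=j+2, 0 otherwise.
  Indices are 0-based in Jordan_Normal_Form; the relations i=j, i=j+1, i=j+2 are shift-invariant.\<close>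
definition G_mat :: "nat \<Rightarrow> real \<Rightarrow> real mat" where
  "G_mat n a = mat (n + 2) n (\<lambda>(i, j).
     if i = j then 1 else if i = j + 1 then a else if i = j + 2 then 1 else 0)"

definition G_del :: "nat \<Rightarrow> real \<Rightarrow> nat \<Rightarrow> nat \<Rightarrow> real mat" where
  "G_del n a i j = submatrix (G_mat n a) ({0..<n + 2} - {i - 1, j - 1}) {0..<n}"

end

theory Submission
  imports Defs
begin

lemma seq_zero:
  fixes y :: "int \<Rightarrow> real" and a :: real and p q N :: int
  assumes a: "\<bar>a\<bar> \<ge> 2" and pq: "0 \<le> p" "p < q" "q \<le> N + 1"
    and out: "\<And>k. k < 0 \<or> k \<ge> N \<Longrightarrow> y k = 0"
    and rec: "\<And>r. 0 \<le> r \<Longrightarrow> r \<le> N + 1 \<Longrightarrow> r \<noteq> p \<Longrightarrow> r \<noteq> q \<Longrightarrow> y r + a * y (r - 1) + y (r - 2) = 0"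
  shows "y k = 0"
proof -
  have fwd: "\<forall>k. k < b \<longrightarrow> y k = 0" if b: "b \<le> q" "b \<le> p \<or> y p = 0" for b
  proof -
    have "\<forall>k. k < b \<longrightarrow> k < int m \<longrightarrow> y k = 0" for m :: nat
    proof (induction m)
      case 0 then show ?case using out by auto
    next
      case (Suc m)
      show ?case
      proof (intro allI impI)
        fix k assume k: "k < b" "k < int (Suc m)"
        show "y k = 0"
        proof (cases "k < int m")
          case True then show ?thesis using Suc k by auto
        next
          case False
          then have km: "k = int m" using k by auto
          show ?thesis
          proof (cases "k = p")
            case True then show ?thesis using b k by auto
          next
            case False
            have "y k + a * y (k - 1) + y (k - 2) = 0"
              using rec[of k] False km k b pq by auto
            moreover have "y (k-1) = 0" "y (k-2) = 0" using Suc km k by auto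
            ultimately show ?thesis by simp
          qed
        qed
      qed
    qed
    note H = this
    show ?thesis
    proof (intro allI impI)
      fix k assume "k < b"
      moreover have "k < int (nat (k+1)) \<or> k < 0" by auto
      ultimately show "y k = 0" using H out by blast
    qed
  qed
  have bwd: "\<forall>k. q - 1 \<le> k \<longrightarrow> y k = 0"
  proof -
    have "\<forall>k. q - 1 \<le> k \<longrightarrow> N - int m \<le> k \<longrightarrow> y k = 0" for m :: nat
    proof (induction m)
      case 0 then show ?case using out by auto
    next
      case (Suc m)
      show ?case
      proof (intro allI impI)
        fix k assume k: "q - 1 \<le> k" "N - int (Suc m) \<le> k"
        show "y k = 0"
        proof (cases "N - int m \<le> k")
          case True then show ?thesis using Suc k by auto
        next
          case False
          then have km: "k = N - int m - 1" using k by auto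
          have "y (k+2) + a * y (k + 2 - 1) + y (k + 2 - 2) = 0"
            using rec[of "k+2"] km k pq by auto
          moreover have "y (k+2) = 0" "y (k+2-1) = 0" using Suc km k by auto
          ultimately show ?thesis by simp
        qed
      qed
    qed
    note H = this
    show ?thesis
    proof (intro allI impI)
      fix k assume "q - 1 \<le> k"
      moreover have "N - int (nat (N - k)) \<le> k" by auto
      ultimately show "y k = 0" using H by blast
    qed
  qed
  have grow: "p + int m \<le> q - 1 \<longrightarrow> \<bar>y (p + int m)\<bar> \<ge> \<bar>y (p + int m - 1)\<bar> + \<bar>y p\<bar>" for m :: nat
  proof (induction m)
    case 0
    have "y (p - 1) = 0" using fwd[of p] pq by auto
    then show ?case by simp
  next
    case (Suc m)
    show ?case
    proof
      assume h: "p + int (Suc m) \<le> q - 1"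
      have IH: "\<bar>y (p + int m)\<bar> \<ge> \<bar>y (p + int m - 1)\<bar> + \<bar>y p\<bar>" using Suc h by auto
      have r: "y (p + int m + 1) + a * y (p + int m + 1 - 1) + y (p + int m + 1 - 2) = 0"
        using rec[of "p + int m + 1"] h pq by auto
      then have e: "y (p + int (Suc m)) = - (a * y (p + int m)) - y (p + int m - 1)"
        by (simp add: algebra_simps)
      have "\<bar>a * y (p + int m)\<bar> \<ge> 2 * \<bar>y (p + int m)\<bar>"
        using a by (simp add: abs_mult mult_right_mono)
      then have "\<bar>y (p + int (Suc m))\<bar> \<ge> 2 * \<bar>y (p + int m)\<bar> - \<bar>y (p + int m - 1)\<bar>"
        unfolding e by linarith
      then show "\<bar>y (p + int (Suc m))\<bar> \<ge> \<bar>y (p + int (Suc m) - 1)\<bar> + \<bar>y p\<bar>"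
        using IH by simp
    qed
  qed
  have "y p = 0"
  proof -
    have "\<bar>y (p + int (nat (q - 1 - p)))\<bar> \<ge> \<bar>y (p + int (nat (q - 1 - p)) - 1)\<bar> + \<bar>y p\<bar>"
      using grow[of "nat (q - 1 - p)"] pq by auto
    moreover have "p + int (nat (q - 1 - p)) = q - 1" using pq by auto
    ultimately have "\<bar>y (q - 1)\<bar> \<ge> \<bar>y p\<bar>" by auto
    then show ?thesis using bwd by auto
  qed
  then have "\<forall>k. k < q \<longrightarrow> y k = 0" using fwd[of q] by auto
  then show ?thesis using bwd by (cases "k < q") auto
qed

lemma sum_pick_int:
  "(\<Sum>c<n. if int c = t then w c else (0::real)) = (if 0 \<le> t \<and> t < int n then w (nat t) else 0)"
proof (cases "0 \<le> t \<and> t < int n")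
  case True
  have "(\<Sum>c<n. if int c = t then w c else (0::real)) = (\<Sum>c<n. if c = nat t then w c else 0)"
    by (rule sum.cong) (use True in auto)
  moreover have "nat t < n" using True by linarith
  then have "(\<Sum>c<n. if c = nat t then w c else (0::real)) = w (nat t)" by (simp add: sum.delta')
  ultimately have calc: "(\<Sum>c<n. if int c = t then w c else (0::real)) = w (nat t)" by simp
  show ?thesis using True calc by metis
next
  case False
  have "(\<Sum>c<n. if int c = t then w c else (0::real)) = (\<Sum>c<n. 0)"
    by (rule sum.cong) (use False in auto)
  then show ?thesis using False by (simp only: if_False sum.neutral_const)
qed

lemma invertible_of_det:
  assumes B: "(B :: real mat) \<in> carrier_mat n n" and d: "det B \<noteq> 0"
  shows "invertible_mat B"
proof -
  have "B \<in> Units (ring_mat TYPE(real) n ())" by (rule det_non_zero_imp_unit[OF B d])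
  then obtain X where X: "X \<in> carrier_mat n n" "X * B = 1\<^sub>m n" "B * X = 1\<^sub>m n"
    unfolding Units_def ring_mat_def by auto
  then show ?thesis using B unfolding invertible_mat_def inverts_mat_def square_mat.simps
    by (metis carrier_matD(1) carrier_matD(2))
qed

theorem proposition4p4:
  fixes n :: nat and a :: real and i j :: nat
  assumes "\<bar>a\<bar> \<ge> 2"
    and "1 \<le> i" and "i < j" and "j \<le> n + 2"
  shows "invertible_mat (G_del n a i j) \<and> det (G_del n a i j) \<noteq> 0"
proof -
  define p where "p = i - 1"
  define q where "q = j - 1"
  define I where "I = {0..<n+2} - {p, q}"
  define G where "G = G_mat n a"
  define B where "B = G_del n a i j"
  have pq: "p < q" "q < n + 2" using assms unfolding p_def q_def by auto
  have Gd: "dim_row G = n + 2" "dim_col G = n" unfolding G_def G_mat_def by auto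
  have Gidx: "G $$ (r, c) = (if r = c then 1 else if r = c + 1 then a else if r = c + 2 then 1 else 0)"
    if "r < n + 2" "c < n" for r c
    using that unfolding G_def G_mat_def by auto
  have Bdef: "B = submatrix G I {0..<n}" unfolding B_def G_del_def G_def I_def p_def q_def by simp
  have rowset: "{r. r < dim_row G \<and> r \<in> I} = I" unfolding Gd I_def by auto
  have cardI: "card I = n" unfolding I_def using pq by (simp add: card_Diff_subset)
  have colset: "{c. c < dim_col G \<and> c \<in> {0..<n}} = {0..<n}" unfolding Gd by auto
  have Bc: "B \<in> carrier_mat n n" unfolding Bdef carrier_mat_def using dim_submatrix[of G I "{0..<n}"] rowset colset cardI by simp
  have cardc: "card {x\<in>{0..<n}. x < c} = c" if "c < n" for c
  proof -
    have "{x\<in>{0..<n}. x < c} = {0..<c}" using that by auto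
    then show ?thesis by simp
  qed
  have detB: "det B \<noteq> 0"
  proof
    assume "det B = 0"
    then obtain v where v: "v \<in> carrier_vec n" "v \<noteq> 0\<^sub>v n" "B *\<^sub>v v = 0\<^sub>v n"
      using det_0_iff_vec_prod_zero_field[OF Bc] by auto
    define y where "y = (\<lambda>t::int. if 0 \<le> t \<and> t < int n then v $ nat t else 0)"
    have rec: "y r + a * y (r - 1) + y (r - 2) = 0"
      if r: "0 \<le> r" "r \<le> int n + 1" "r \<noteq> int p" "r \<noteq> int q" for r
    proof -
      define r' where "r' = nat r"
      have r'I: "r' \<in> I" unfolding I_def r'_def using r by auto
      define k where "k = card {x\<in>I. x < r'}"
      have "{x\<in>I. x < r'} \<subset> I" using r'I by auto
      then have kn: "k < n" unfolding k_def using cardI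
        by (metis I_def finite_Diff finite_atLeastLessThan psubset_card_mono)
      have "0 = (B *\<^sub>v v) $ k" using v kn by simp
      also have "\<dots> = (\<Sum>c\<in>{0..<n}. B $$ (k, c) * v $ c)"
      proof -
        have dv: "dim_vec v = n" using v by auto
        have dB: "dim_row B = n" "dim_col B = n" using Bc by auto
        show ?thesis using kn dB dv by (auto simp: scalar_prod_def intro!: sum.cong)
      qed
      also have "\<dots> = (\<Sum>c\<in>{0..<n}. G $$ (r', c) * v $ c)"
      proof (rule sum.cong)
        fix c assume c: "c \<in> {0..<n}"
        have "B $$ (k, c) = B $$ (card {x\<in>I. x < r'}, card {x\<in>{0..<n}. x < c})"
          using c cardc k_def by auto
        also have "\<dots> = G $$ (r', c)" unfolding Bdef
          by (rule submatrix_index_card) (use r'I c Gd I_def in auto)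
        finally show "B $$ (k, c) * v $ c = G $$ (r', c) * v $ c" by simp
      qed simp
      also have "\<dots> = (\<Sum>c<n. (if int c = r then v $ c else 0) + a * (if int c = r - 1 then v $ c else 0)
                          + (if int c = r - 2 then v $ c else 0))"
      proof (rule sum.cong)
        fix c assume c: "c \<in> {..<n}"
        have "r' < n + 2" using r'I I_def by auto
        then show "G $$ (r', c) * v $ c = (if int c = r then v $ c else 0) + a * (if int c = r - 1 then v $ c else 0)
                          + (if int c = r - 2 then v $ c else 0)"
          using c Gidx[of r' c] r unfolding r'_def by auto
      qed auto
      also have "\<dots> = y r + a * y (r - 1) + y (r - 2)"
        unfolding sum.distrib sum_distrib_left[symmetric] sum_pick_int y_def by simp
      finally show ?thesis by simp
    qed
    have yz: "y t = 0" for t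
      by (rule seq_zero[of a "int p" "int q" "int n" y]) (use assms pq rec in \<open>auto simp: y_def\<close>)
    have "v = 0\<^sub>v n"
    proof (rule eq_vecI)
      fix c assume "c < dim_vec (0\<^sub>v n)"
      then have "c < n" by simp
      then show "v $ c = 0\<^sub>v n $ c" using yz[of "int c"] unfolding y_def by simp
    qed (use v in auto)
    then show False using v by simp
  qed
  show ?thesis using detB invertible_of_det[OF Bc detB] unfolding B_def by simp
qed

end
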